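(* If $d: t \to_w^* u$ is a reduction sequence, then $t \to_{w\neg gcv}^{k} \to_{wgcv}^{h} u$ where $k$ is the number of $\to_{w\neg gcv}$ steps in $d$ and $h$ is greater than or equal to the number of $\to_{wgcv}$ steps in $d$.
   Context: Terms: $t,u,s ::= x \mid \lambda x.t \mid t\,u \mid t[x\backslash u]$, where $t[x\backslash u]$ is an explicit substitution binding $x$ in $t$; terms up to $\alpha$-renaming. Values: $v ::= \lambda x.t$. Substitution contexts: $S ::= \langle\cdot\rangle \mid S[x\backslash u]$. Weak contexts: $W ::= \langle\cdot\rangle \mid W\,t \mid t\,W \mid t[x\backslash W] \mid W[x\backslash u]$. $W\langle\langle t\rangle\rangle$ denotes plugging where $W$ does not capture free variables of $t$. Root rules: $S\langle \lambda x.t\rangle u \mapsto_m S\langle t[x\backslash u]\rangle$; $W\langle\langle x\rangle\rangle[x\backslash u] \mapsto_{e} W\langle\langle u\rangle\rangle[x\backslash u]$ ($W$ weak context); $t[x\backslash S\langle v\rangle] \mapsto_{gcv} S\langle t\rangle$ if $x\notin\mathrm{fv}(t)$. $\to_{wm},\to_{we},\to_{wgcv}$ are their closures under weak contexts, $\to_w$ their union, $\to_{w\neg gcv}:=\to_{wm}\cup\to_{we}$. *)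

theory Defs
  imports Main
begin

text \<open>Terms up to alpha-renaming, represented with de Bruijn indices.
  ES t u stands for t[x\u]; the explicit substitution binds index 0 in t (not in u).\<close>

datatype trm = Var nat | Lam trm | App trm trm | ES trm trm

fun lift :: "nat \<Rightarrow> nat \<Rightarrow> trm \<Rightarrow> trm" where
  "lift k c (Var i) = (if i < c then Var i else Var (i + k))"
| "lift k c (Lam t) = Lam (lift k (Suc c) t)"
| "lift k c (App t u) = App (lift k c t) (lift k c u)"
| "lift k c (ES t u) = ES (lift k (Suc c) t) (lift k c u)"

text \<open>lower c t: remove the (non-occurring) variable c, decrementing indices > c.\<close>
fun lower :: "nat \<Rightarrow> trm \<Rightarrow> trm" where
  "lower c (Var i) = (if i < c then Var i else Var (i - 1))"
| "lower c (Lam t) = Lam (lower (Suc c) t)"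
| "lower c (App t u) = App (lower c t) (lower c u)"
| "lower c (ES t u) = ES (lower (Suc c) t) (lower c u)"

fun occurs :: "nat \<Rightarrow> trm \<Rightarrow> bool" where
  "occurs c (Var i) = (i = c)"
| "occurs c (Lam t) = occurs (Suc c) t"
| "occurs c (App t u) = (occurs c t \<or> occurs c u)"
| "occurs c (ES t u) = (occurs (Suc c) t \<or> occurs c u)"

text \<open>Substitution contexts S ::= <.> | S[x\u], as the list of substituted terms,
  outermost first: plugS (u # S) t = (plugS S t)[x\u].\<close>
fun plugS :: "trm list \<Rightarrow> trm \<Rightarrow> trm" where
  "plugS [] t = t"
| "plugS (u # S) t = ES (plugS S t) u"

datatype wctx = Hole | CAppL wctx trm | CAppR trm wctx | CESR trm wctx | CESL wctx trm

fun plugW :: "wctx \<Rightarrow> trm \<Rightarrow> trm" where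
  "plugW Hole t = t"
| "plugW (CAppL W u) t = App (plugW W t) u"
| "plugW (CAppR u W) t = App u (plugW W t)"
| "plugW (CESR u W) t = ES u (plugW W t)"
| "plugW (CESL W u) t = ES (plugW W t) u"

fun depthW :: "wctx \<Rightarrow> nat" where
  "depthW Hole = 0"
| "depthW (CAppL W u) = depthW W"
| "depthW (CAppR u W) = depthW W"
| "depthW (CESR u W) = depthW W"
| "depthW (CESL W u) = Suc (depthW W)"

datatype rkind = KM | KE | KGCV

inductive wstep :: "rkind \<Rightarrow> trm \<Rightarrow> trm \<Rightarrow> bool" where
  root_m: "wstep KM (App (plugS S (Lam t)) u) (plugS S (ES t (lift (length S) 0 u)))"
| root_e: "wstep KE (ES (plugW W (Var (depthW W))) u)
                    (ES (plugW W (lift (Suc (depthW W)) 0 u)) u)"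
| root_gcv: "\<not> occurs 0 t \<Longrightarrow>
     wstep KGCV (ES t (plugS S (Lam v))) (plugS S (lift (length S) 0 (lower 0 t)))"
| appL: "wstep k t t' \<Longrightarrow> wstep k (App t u) (App t' u)"
| appR: "wstep k u u' \<Longrightarrow> wstep k (App t u) (App t u')"
| esL: "wstep k t t' \<Longrightarrow> wstep k (ES t u) (ES t' u)"
| esR: "wstep k u u' \<Longrightarrow> wstep k (ES t u) (ES t u')"

definition wngcv :: "trm \<Rightarrow> trm \<Rightarrow> bool" where
  "wngcv t u \<longleftrightarrow> wstep KM t u \<or> wstep KE t u"

definition wgcv :: "trm \<Rightarrow> trm \<Rightarrow> bool" where
  "wgcv t u \<longleftrightarrow> wstep KGCV t u"

text \<open>A reduction sequence d : t ->w* u, recorded by the list of labels of its steps.\<close>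
inductive wseq :: "trm \<Rightarrow> rkind list \<Rightarrow> trm \<Rightarrow> bool" where
  nil: "wseq t [] t"
| cons: "wstep k t s \<Longrightarrow> wseq s ks u \<Longrightarrow> wseq t (k # ks) u"

end

theory Submission
  imports Defs
begin

lemma lift_0[simp]: "lift 0 c t = t"
  by (induction t arbitrary: c) auto

lemma lift_lift: "c \<le> d \<Longrightarrow> d \<le> c + b \<Longrightarrow> lift a d (lift b c w) = lift (a + b) c w"
  by (induction w arbitrary: c d) auto

lemma lift_comm: "j \<le> c \<Longrightarrow> lift n (c + k) (lift k j u) = lift k j (lift n c u)"
  apply (induction u arbitrary: c j)
     apply auto
   apply (metis Suc_le_mono add_Suc)+
  done

lemma lift_comm0: "lift n (c + k) (lift k 0 u) = lift k 0 (lift n c u)"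
  using lift_comm[of 0 c n k u] by simp

lemma lower_lift[simp]: "lower c (lift (Suc 0) c t) = t"
  by (induction t arbitrary: c) auto

lemma lift_lower: "\<not> occurs c t \<Longrightarrow> lift (Suc 0) c (lower c t) = t"
  by (induction t arbitrary: c) auto

lemma occurs_lift: "occurs i (lift n c t) = (if i < c then occurs i t else if i < c + n then False else occurs (i - n) t)"
  by (induction t arbitrary: i c) (auto simp: Suc_diff_le)

lemma lower_lift_comm: "\<not> occurs d t \<Longrightarrow> d \<le> c \<Longrightarrow> lower d (lift n (Suc c) t) = lift n c (lower d t)"
  by (induction t arbitrary: c d) auto

fun liftS :: "nat \<Rightarrow> nat \<Rightarrow> trm list \<Rightarrow> trm list" where
  "liftS k c [] = []"
| "liftS k c (u # S) = lift k c u # liftS k (Suc c) S"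

fun liftW :: "nat \<Rightarrow> nat \<Rightarrow> wctx \<Rightarrow> wctx" where
  "liftW k c Hole = Hole"
| "liftW k c (CAppL W u) = CAppL (liftW k c W) (lift k c u)"
| "liftW k c (CAppR u W) = CAppR (lift k c u) (liftW k c W)"
| "liftW k c (CESR u W) = CESR (lift k (Suc c) u) (liftW k c W)"
| "liftW k c (CESL W u) = CESL (liftW k (Suc c) W) (lift k c u)"

fun wS :: "trm list \<Rightarrow> wctx \<Rightarrow> wctx" where
  "wS [] W = W"
| "wS (u # S) W = CESL (wS S W) u"

lemma length_liftS[simp]: "length (liftS k c S) = length S"
  by (induction S arbitrary: c) auto

lemma depthW_liftW[simp]: "depthW (liftW k c W) = depthW W"
  by (induction W arbitrary: c) auto

lemma plugS_append: "plugS (S1 @ S2) X = plugS S1 (plugS S2 X)"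
  by (induction S1) auto

lemma plugW_wS[simp]: "plugW (wS S W) X = plugS S (plugW W X)"
  by (induction S) auto

lemma depthW_wS[simp]: "depthW (wS S W) = length S + depthW W"
  by (induction S) auto

lemma lift_plugS: "lift k c (plugS S t) = plugS (liftS k c S) (lift k (c + length S) t)"
  by (induction S arbitrary: c) auto

lemma lift_plugW: "lift k c (plugW W t) = plugW (liftW k c W) (lift k (c + depthW W) t)"
  by (induction W arbitrary: c) auto

lemma lift_eq_plugS: "lift k c a = plugS S X \<Longrightarrow>
   \<exists>Sa Xa. a = plugS Sa Xa \<and> S = liftS k c Sa \<and> X = lift k (c + length S) Xa"
proof (induction S arbitrary: a c)
  case Nil then show ?case by (intro exI[of _ "[]"]) auto
next
  case (Cons u S)
  then obtain a1 a2 where a: "a = ES a1 a2" by (cases a) (auto split: if_splits)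
  with Cons.prems have "lift k (Suc c) a1 = plugS S X" "lift k c a2 = u" by auto
  from Cons.IH[OF this(1)] obtain Sa Xa where "a1 = plugS Sa Xa" "S = liftS k (Suc c) Sa"
    "X = lift k (Suc c + length S) Xa" by blast
  then show ?case using a \<open>lift k c a2 = u\<close> by (intro exI[of _ "a2 # Sa"] exI[of _ Xa]) auto
qed

lemma lift_eq_plugW: "lift k c a = plugW W X \<Longrightarrow>
   \<exists>Wa Xa. a = plugW Wa Xa \<and> W = liftW k c Wa \<and> X = lift k (c + depthW W) Xa"
proof (induction W arbitrary: a c)
  case Hole then show ?case by (intro exI[of _ Hole]) auto
next
  case (CAppL W u)
  then obtain a1 a2 where a: "a = App a1 a2" by (cases a) (auto split: if_splits)
  with CAppL show ?case by (fastforce dest!: CAppL.IH intro: exI[of _ "CAppL _ a2"])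
next
  case (CAppR u W)
  then obtain a1 a2 where a: "a = App a1 a2" by (cases a) (auto split: if_splits)
  with CAppR show ?case by (fastforce dest!: CAppR.IH intro: exI[of _ "CAppR a1 _"])
next
  case (CESR u W)
  then obtain a1 a2 where a: "a = ES a1 a2" by (cases a) (auto split: if_splits)
  with CESR show ?case by (fastforce dest!: CESR.IH intro: exI[of _ "CESR a1 _"])
next
  case (CESL W u)
  then obtain a1 a2 where a: "a = ES a1 a2" by (cases a) (auto split: if_splits)
  with CESL show ?case by (fastforce dest!: CESL.IH intro: exI[of _ "CESL _ a2"])
qed

lemma lift_eq_Lam: "lift k c a = Lam b \<Longrightarrow> \<exists>ba. a = Lam ba \<and> b = lift k (Suc c) ba"
  by (cases a) (auto split: if_splits)

lemma lift_eq_Var: "lift k c a = Var j \<Longrightarrow> \<exists>i. a = Var i \<and> j = (if i < c then i else i + k)"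
  by (cases a) (auto split: if_splits)

lemma plugS_eq_Lam: "plugS S2 Y = plugS S (Lam b) \<Longrightarrow> \<exists>S1. S = S2 @ S1 \<and> Y = plugS S1 (Lam b)"
proof (induction S2 arbitrary: S)
  case Nil then show ?case by auto
next
  case (Cons y S2)
  then show ?case by (cases S) auto
qed

lemma plugW_eq_plugS: "plugW W (Var i) = plugS S0 A \<Longrightarrow>
  (\<exists>W1. W = wS S0 W1 \<and> plugW W1 (Var i) = A) \<or>
  (\<exists>S1 y S3 W1. S0 = S1 @ y # S3 \<and> W = wS S1 (CESR (plugS S3 A) W1) \<and> plugW W1 (Var i) = y)"
proof (induction S0 arbitrary: W)
  case Nil then show ?case by (intro disjI1 exI[of _ W]) auto
next
  case (Cons u S)
  show ?case
  proof (cases W)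
    case (CESR a W0)
    then show ?thesis using Cons.prems by (intro disjI2 exI[of _ "[]"]) auto
  next
    case (CESL W0 b)
    with Cons.prems have "plugW W0 (Var i) = plugS S A" "b = u" by auto
    from Cons.IH[OF this(1)] show ?thesis
    proof
      assume "\<exists>W1. W0 = wS S W1 \<and> plugW W1 (Var i) = A"
      then show ?thesis using CESL \<open>b = u\<close> by auto
    next
      assume "\<exists>S1 y S3 W1. S = S1 @ y # S3 \<and> W0 = wS S1 (CESR (plugS S3 A) W1) \<and> plugW W1 (Var i) = y"
      then obtain S1 y S3 W1 where "S = S1 @ y # S3" "W0 = wS S1 (CESR (plugS S3 A) W1)" "plugW W1 (Var i) = y" by blast
      then show ?thesis using CESL \<open>b = u\<close> by (intro disjI2 exI[of _ "u # S1"]) auto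
    qed
  qed (use Cons.prems in auto)
qed

lemma occurs_plugW_Var: "occurs c (plugW W (Var (c + depthW W)))"
  by (induction W arbitrary: c) (auto, metis add_Suc)

lemma wstep_plugS: "wstep k x y \<Longrightarrow> wstep k (plugS S x) (plugS S y)"
  by (induction S) (auto intro: wstep.intros)

lemma wstep_plugW: "wstep k x y \<Longrightarrow> wstep k (plugW W x) (plugW W y)"
  by (induction W) (auto intro: wstep.intros)

lemma wgcv_pow_plugW: "(wgcv ^^ m) x y \<Longrightarrow> (wgcv ^^ m) (plugW W x) (plugW W y)"
proof (induction m arbitrary: y)
  case 0 then show ?case by simp
next
  case (Suc m)
  then obtain z where "(wgcv ^^ m) x z" "wgcv z y" by auto
  moreover have "wgcv (plugW W z) (plugW W y)" using \<open>wgcv z y\<close> wstep_plugW by (simp add: wgcv_def)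
  ultimately show ?case using Suc.IH by (meson relpowp_Suc_I)
qed

lemma wstep_eq: "wstep k a b \<Longrightarrow> a = a' \<Longrightarrow> b = b' \<Longrightarrow> wstep k a' b'"
  by simp

lemma gcv_root': "wstep KGCV (ES (lift (Suc 0) 0 a) (plugS S (Lam v))) (plugS S (lift (length S) 0 a))"
  using wstep.root_gcv[of "lift (Suc 0) 0 a" S v] by (simp add: occurs_lift)

lemma wstep_lift: "wstep k t t' \<Longrightarrow> wstep k (lift n c t) (lift n c t')"
proof (induction arbitrary: c rule: wstep.induct)
  case (root_m S t u)
  show ?case
    apply (rule wstep_eq[OF wstep.root_m[of "liftS n c S" "lift n (Suc (c + length S)) t" "lift n c u"]])
     apply (simp add: lift_plugS)
    apply (simp add: lift_plugS lift_comm0)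
    done
next
  case (root_e W u)
  have "lift n (Suc (c + depthW W)) (lift (Suc (depthW W)) 0 u) = lift (Suc (depthW W)) 0 (lift n c u)"
    using lift_comm0[of n c "Suc (depthW W)" u] by simp
  then show ?case
    apply -
    apply (rule wstep_eq[OF wstep.root_e[of "liftW n (Suc c) W" "lift n c u"]])
     apply (simp add: lift_plugW)
    apply (simp add: lift_plugW)
    done
next
  case (root_gcv t S v)
  have "lower 0 (lift n (Suc c) t) = lift n c (lower 0 t)"
    using lower_lift_comm[of 0 t c n] root_gcv by simp
  then show ?case
    apply -
    apply (rule wstep_eq[OF wstep.root_gcv[of "lift n (Suc c) t" "liftS n c S" "lift n (Suc (c + length S)) v"]])
      apply (use root_gcv in \<open>simp add: occurs_lift\<close>)
     apply (simp add: lift_plugS)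
    apply (simp add: lift_plugS lift_comm0)
    done
qed (auto intro: wstep.intros)

lemma wstep_lift_refl: "wstep k x s' \<Longrightarrow> x = lift n c t \<Longrightarrow> \<exists>t'. wstep k t t' \<and> s' = lift n c t'"
proof (induction arbitrary: c t rule: wstep.induct)
  case (root_m S b u)
  then obtain t1 u0 where t: "t = App t1 u0" "lift n c t1 = plugS S (Lam b)" "u = lift n c u0"
    by (cases t) (auto split: if_splits)
  from lift_eq_plugS[OF t(2)] obtain Sa Xa where a: "t1 = plugS Sa Xa" "S = liftS n c Sa"
    "Lam b = lift n (c + length S) Xa" by blast
  from lift_eq_Lam[OF a(3)[symmetric]] obtain ba where ba: "Xa = Lam ba" "b = lift n (Suc (c + length S)) ba"
    by blast
  show ?case
    apply (rule exI[of _ "plugS Sa (ES ba (lift (length Sa) 0 u0))"])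
    apply (rule conjI)
     apply (simp add: t a ba wstep.root_m)
    apply (simp add: t a ba lift_plugS lift_comm0)
    done
next
  case (root_e W u)
  then obtain t1 u0 where t: "t = ES t1 u0" "lift n (Suc c) t1 = plugW W (Var (depthW W))" "u = lift n c u0"
    by (cases t) (auto split: if_splits)
  from lift_eq_plugW[OF t(2)] obtain Wa Xa where a: "t1 = plugW Wa Xa" "W = liftW n (Suc c) Wa"
    "Var (depthW W) = lift n (Suc c + depthW W) Xa" by blast
  from lift_eq_Var[OF a(3)[symmetric]] have xa: "Xa = Var (depthW Wa)" using a(2)
    by (auto split: if_splits)
  have "lift n (Suc (c + depthW Wa)) (lift (Suc (depthW Wa)) 0 u0) = lift (Suc (depthW Wa)) 0 (lift n c u0)"
    using lift_comm0[of n c "Suc (depthW Wa)" u0] by simp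
  then show ?case
    apply -
    apply (rule exI[of _ "ES (plugW Wa (lift (Suc (depthW Wa)) 0 u0)) u0"])
    apply (rule conjI)
     apply (simp add: t a xa wstep.root_e)
    apply (simp add: t a xa lift_plugW)
    done
next
  case (root_gcv t0 S v)
  then obtain ta pa where t: "t = ES ta pa" "t0 = lift n (Suc c) ta" "lift n c pa = plugS S (Lam v)"
    by (cases t) (auto split: if_splits)
  from lift_eq_plugS[OF t(3)] obtain Sa Xa where a: "pa = plugS Sa Xa" "S = liftS n c Sa"
    "Lam v = lift n (c + length S) Xa" by blast
  from lift_eq_Lam[OF a(3)[symmetric]] obtain va where va: "Xa = Lam va" by blast
  have occ: "\<not> occurs 0 ta" using root_gcv(1) t(2) by (simp add: occurs_lift)
  have low: "lower 0 (lift n (Suc c) ta) = lift n c (lower 0 ta)"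
    using lower_lift_comm[of 0 ta c n] occ by simp
  show ?case
    apply (rule exI[of _ "plugS Sa (lift (length Sa) 0 (lower 0 ta))"])
    apply (rule conjI)
     apply (simp add: t a va wstep.root_gcv occ)
    apply (simp add: t a va low lift_plugS lift_comm0)
    done
next
  case (appL k t1 t1' u)
  then obtain a1 a2 where "t = App a1 a2" by (cases t) (auto split: if_splits)
  with appL show ?case by (fastforce intro: wstep.intros)
next
  case (appR k u u' t1)
  then obtain a1 a2 where "t = App a1 a2" by (cases t) (auto split: if_splits)
  with appR show ?case by (fastforce intro: wstep.intros)
next
  case (esL k t1 t1' u)
  then obtain a1 a2 where "t = ES a1 a2" by (cases t) (auto split: if_splits)
  with esL show ?case by (fastforce intro: wstep.intros)
next
  case (esR k u u' t1)
  then obtain a1 a2 where "t = ES a1 a2" by (cases t) (auto split: if_splits)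
  with esR show ?case by (fastforce intro: wstep.intros)
qed

lemma step_plugS_split:
  "wstep k (plugS S A) u \<Longrightarrow> (\<forall>i<length S. \<not> occurs i A) \<Longrightarrow> k \<noteq> KGCV \<Longrightarrow>
   (\<exists>A'. wstep k A A' \<and> u = plugS S A') \<or>
   (\<exists>S'. length S' = length S \<and> u = plugS S' A \<and> (\<forall>B. wstep k (plugS S B) (plugS S' B)))"
proof (induction S arbitrary: u)
  case Nil then show ?case by auto
next
  case (Cons w S0)
  from Cons.prems(1) have st: "wstep k (ES (plugS S0 A) w) u" by simp
  from st show ?case
  proof (cases rule: wstep.cases)
    case (root_e W)
    from plugW_eq_plugS[OF root_e(2)[symmetric]] show ?thesis
    proof
      assume "\<exists>W1. W = wS S0 W1 \<and> plugW W1 (Var (depthW W)) = A"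
      then obtain W1 where "W = wS S0 W1" "plugW W1 (Var (depthW W)) = A" by blast
      then have "occurs (length S0) A" using occurs_plugW_Var[of "length S0" W1] by simp
      with Cons.prems(2) show ?thesis by auto
    next
      assume "\<exists>S1 y S3 W1. S0 = S1 @ y # S3 \<and> W = wS S1 (CESR (plugS S3 A) W1) \<and> plugW W1 (Var (depthW W)) = y"
      then obtain S1 y S3 W1 where e: "S0 = S1 @ y # S3" "W = wS S1 (CESR (plugS S3 A) W1)"
        "plugW W1 (Var (depthW W)) = y" by blast
      let ?y' = "plugW W1 (lift (Suc (depthW W)) 0 w)"
      have "\<forall>B. wstep k (plugS (w # S0) B) (plugS (w # S1 @ ?y' # S3) B)"
      proof
        fix B
        show "wstep k (plugS (w # S0) B) (plugS (w # S1 @ ?y' # S3) B)"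
          using wstep.root_e[of "wS S1 (CESR (plugS S3 B) W1)" w] e root_e
          by (simp add: plugS_append)
      qed
      then show ?thesis using root_e e by (intro disjI2 exI[of _ "w # S1 @ ?y' # S3"]) (simp add: plugS_append)
    qed
  next
    case (esL t')
    have "\<forall>i<length S0. \<not> occurs i A" using Cons.prems(2) by simp
    from Cons.IH[OF esL(2) this Cons.prems(3)] show ?thesis
    proof
      assume "\<exists>A'. wstep k A A' \<and> t' = plugS S0 A'"
      then show ?thesis using esL by auto
    next
      assume "\<exists>S'. length S' = length S0 \<and> t' = plugS S' A \<and> (\<forall>B. wstep k (plugS S0 B) (plugS S' B))"
      then obtain S' where "length S' = length S0" "t' = plugS S' A" "\<forall>B. wstep k (plugS S0 B) (plugS S' B)" by blast
      then show ?thesis using esL by (intro disjI2 exI[of _ "w # S'"]) (auto intro: wstep.esL)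
    qed
  next
    case (esR w')
    then show ?thesis by (intro disjI2 exI[of _ "w' # S0"]) (auto intro: wstep.esR)
  qed (use Cons.prems in auto)
qed

lemma plugS_Lam_not_App: "plugS S (Lam b) \<noteq> App x y"
  by (cases S) auto

lemma M_lemma: "wstep g t1 x \<Longrightarrow> g = KGCV \<Longrightarrow> x = plugS S (Lam b) \<Longrightarrow>
  \<exists>S' b'. t1 = plugS S' (Lam b') \<and>
    (\<forall>w. wstep KGCV (plugS S' (ES b' (lift (length S') 0 w))) (plugS S (ES b (lift (length S) 0 w))))"
proof (induction arbitrary: S b rule: wstep.induct)
  case (root_gcv t0 S2 v)
  define a where "a = lower 0 t0"
  have t0: "t0 = lift (Suc 0) 0 a" using root_gcv(1) lift_lower a_def by simp
  from plugS_eq_Lam[OF root_gcv(3)] obtain S1 where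
    s: "S = S2 @ S1" "lift (length S2) 0 (lower 0 t0) = plugS S1 (Lam b)" by blast
  from lift_eq_plugS[OF s(2)] obtain S1a Xa where
    i: "lower 0 t0 = plugS S1a Xa" "S1 = liftS (length S2) 0 S1a" "Lam b = lift (length S2) (length S1) Xa"
    by auto
  from lift_eq_Lam[OF i(3)[symmetric]] obtain ba where ba: "Xa = Lam ba" "b = lift (length S2) (Suc (length S1)) ba"
    by blast
  let ?P = "plugS S2 (Lam v)"
  show ?case
  proof (intro exI conjI allI)
    show "ES t0 ?P = plugS (?P # liftS 1 0 S1a) (Lam (lift 1 (Suc (length S1a)) ba))"
      using t0 i(1) a_def ba by (simp add: lift_plugS)
  next
    fix w
    let ?X = "plugS S1a (ES ba (lift (length S1a) 0 w))"
    have e1: "plugS (?P # liftS 1 0 S1a) (ES (lift 1 (Suc (length S1a)) ba) (lift (length (?P # liftS 1 0 S1a)) 0 w))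
      = ES (lift (Suc 0) 0 ?X) ?P"
      by (simp add: lift_plugS lift_lift)
    have e2: "plugS S2 (lift (length S2) 0 ?X) = plugS S (ES b (lift (length S) 0 w))"
      using s(1) i(2) ba by (simp add: lift_plugS lift_lift plugS_append)
    show "wstep KGCV (plugS (?P # liftS 1 0 S1a) (ES (lift 1 (Suc (length S1a)) ba) (lift (length (?P # liftS 1 0 S1a)) 0 w)))
      (plugS S (ES b (lift (length S) 0 w)))"
      unfolding e1 e2[symmetric] by (rule gcv_root')
  qed
next
  case (appL k t t' u) then show ?case using plugS_Lam_not_App by metis
next
  case (appR k t t' u) then show ?case using plugS_Lam_not_App by metis
next
  case (esL k t t' u)
  then obtain S0 where S: "S = u # S0" "t' = plugS S0 (Lam b)" by (cases S) auto
  from esL.IH[OF esL.prems(1) S(2)] obtain S' b' where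
    ih: "t = plugS S' (Lam b')" "\<forall>w. wstep KGCV (plugS S' (ES b' (lift (length S') 0 w))) (plugS S0 (ES b (lift (length S0) 0 w)))"
    by blast
  show ?case
  proof (intro exI conjI allI)
    show "ES t u = plugS (u # S') (Lam b')" using ih by simp
  next
    fix w
    have l: "lift (Suc (length S')) 0 w = lift (length S') 0 (lift 1 0 w)"
      "lift (Suc (length S0)) 0 w = lift (length S0) 0 (lift 1 0 w)" by (simp_all add: lift_lift)
    show "wstep KGCV (plugS (u # S') (ES b' (lift (length (u # S')) 0 w))) (plugS S (ES b (lift (length S) 0 w)))"
      using ih(2)[rule_format, of "lift 1 0 w"] S by (simp add: l wstep.esL del: lift.simps)
  qed
next
  case (esR k u u' t)
  then obtain S0 where S: "S = u' # S0" "t = plugS S0 (Lam b)" by (cases S) auto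
  then show ?case using esR by (intro exI[of _ "u # S0"] exI[of _ b]) (auto intro: wstep.esR)
qed auto

lemma E_lemma: "wstep g t1 x \<Longrightarrow> g = KGCV \<Longrightarrow> x = plugW W (Var (n + depthW W)) \<Longrightarrow>
  \<exists>W'. t1 = plugW W' (Var (n + depthW W')) \<and>
    (\<forall>w. wstep KGCV (plugW W' (lift (Suc n + depthW W') 0 w)) (plugW W (lift (Suc n + depthW W) 0 w)))"
proof (induction arbitrary: W n rule: wstep.induct)
  case (root_gcv t0 S2 v)
  define a where "a = lower 0 t0"
  have t0: "t0 = lift (Suc 0) 0 a" using root_gcv(1) lift_lower a_def by simp
  let ?A = "lift (length S2) 0 a"
  let ?P = "plugS S2 (Lam v)"
  have x: "plugW W (Var (n + depthW W)) = plugS S2 ?A" using root_gcv(3) a_def by simp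
  from plugW_eq_plugS[OF x] show ?case
  proof
    assume "\<exists>W1. W = wS S2 W1 \<and> plugW W1 (Var (n + depthW W)) = ?A"
    then obtain W1 where w1: "W = wS S2 W1" "lift (length S2) 0 a = plugW W1 (Var (n + depthW W))" by auto
    from lift_eq_plugW[OF w1(2)] obtain Wa Xa where
      i: "a = plugW Wa Xa" "W1 = liftW (length S2) 0 Wa" "Var (n + depthW W) = lift (length S2) (depthW W1) Xa"
      by auto
    from lift_eq_Var[OF i(3)[symmetric]] w1(1) i(2) have xa: "Xa = Var (n + depthW Wa)"
      by (auto split: if_splits)
    show ?thesis
    proof (intro exI conjI allI)
      show "ES t0 ?P = plugW (CESL (liftW 1 0 Wa) ?P) (Var (n + depthW (CESL (liftW 1 0 Wa) ?P)))"
        using t0 i(1) xa by (simp add: lift_plugW)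
    next
      fix w
      let ?a' = "plugW Wa (lift (Suc n + depthW Wa) 0 w)"
      have e1: "plugW (CESL (liftW 1 0 Wa) ?P) (lift (Suc n + depthW (CESL (liftW 1 0 Wa) ?P)) 0 w)
         = ES (lift (Suc 0) 0 ?a') ?P"
        by (simp add: lift_plugW lift_lift)
      have e2: "plugS S2 (lift (length S2) 0 ?a') = plugW W (lift (Suc n + depthW W) 0 w)"
        using w1(1) i(2) by (simp add: lift_plugW lift_lift algebra_simps)
      show "wstep KGCV (plugW (CESL (liftW 1 0 Wa) ?P) (lift (Suc n + depthW (CESL (liftW 1 0 Wa) ?P)) 0 w))
          (plugW W (lift (Suc n + depthW W) 0 w))"
        unfolding e1 e2[symmetric] by (rule gcv_root')
    qed
  next
    assume "\<exists>S1 y S3 W1. S2 = S1 @ y # S3 \<and> W = wS S1 (CESR (plugS S3 ?A) W1) \<and> plugW W1 (Var (n + depthW W)) = y"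
    then obtain S1 y S3 W1 where e: "S2 = S1 @ y # S3" "W = wS S1 (CESR (plugS S3 ?A) W1)"
        "plugW W1 (Var (n + depthW W)) = y" by blast
    let ?W' = "CESR t0 (wS S1 (CESR (plugS S3 (Lam v)) W1))"
    show ?thesis
    proof (intro exI conjI allI)
      show "ES t0 ?P = plugW ?W' (Var (n + depthW ?W'))" using e by (simp add: plugS_append)
    next
      fix w
      let ?y' = "plugW W1 (lift (Suc n + depthW W) 0 w)"
      have e1: "plugW ?W' (lift (Suc n + depthW ?W') 0 w) = ES (lift (Suc 0) 0 a) (plugS (S1 @ ?y' # S3) (Lam v))"
        using e t0 by (simp add: plugS_append)
      have e2: "plugS (S1 @ ?y' # S3) (lift (length (S1 @ ?y' # S3)) 0 a) = plugW W (lift (Suc n + depthW W) 0 w)"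
        using e by (simp add: plugS_append)
      show "wstep KGCV (plugW ?W' (lift (Suc n + depthW ?W') 0 w)) (plugW W (lift (Suc n + depthW W) 0 w))"
        unfolding e1 e2[symmetric] by (rule gcv_root')
    qed
  qed
next
  case (appL k t t' u)
  show ?case
  proof (cases W)
    case (CAppL W0 u0)
    with appL.prems have "t' = plugW W0 (Var (n + depthW W0))" "u0 = u" by auto
    from appL.IH[OF appL.prems(1) this(1)] obtain W' where
      "t = plugW W' (Var (n + depthW W'))"
      "\<forall>w. wstep KGCV (plugW W' (lift (Suc n + depthW W') 0 w)) (plugW W0 (lift (Suc n + depthW W0) 0 w))" by blast
    then show ?thesis using CAppL \<open>u0 = u\<close> by (intro exI[of _ "CAppL W' u"]) (auto intro: wstep.appL)
  next
    case (CAppR u0 W0)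
    with appL.prems have "u = plugW W0 (Var (n + depthW W0))" "u0 = t'" by auto
    then show ?thesis using CAppR appL by (intro exI[of _ "CAppR t W0"]) (auto intro: wstep.appL)
  qed (use appL.prems in auto)
next
  case (appR k u u' t)
  show ?case
  proof (cases W)
    case (CAppR u0 W0)
    with appR.prems have "u' = plugW W0 (Var (n + depthW W0))" "u0 = t" by auto
    from appR.IH[OF appR.prems(1) this(1)] obtain W' where
      "u = plugW W' (Var (n + depthW W'))"
      "\<forall>w. wstep KGCV (plugW W' (lift (Suc n + depthW W') 0 w)) (plugW W0 (lift (Suc n + depthW W0) 0 w))" by blast
    then show ?thesis using CAppR \<open>u0 = t\<close> by (intro exI[of _ "CAppR t W'"]) (auto intro: wstep.appR)
  next
    case (CAppL W0 u0)
    with appR.prems have "t = plugW W0 (Var (n + depthW W0))" "u0 = u'" by auto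
    then show ?thesis using CAppL appR by (intro exI[of _ "CAppL W0 u"]) (auto intro: wstep.appR)
  qed (use appR.prems in auto)
next
  case (esL k t t' u)
  show ?case
  proof (cases W)
    case (CESL W0 u0)
    with esL.prems have "t' = plugW W0 (Var (Suc n + depthW W0))" "u0 = u" by auto
    from esL.IH[OF esL.prems(1) this(1)] obtain W' where
      "t = plugW W' (Var (Suc n + depthW W'))"
      "\<forall>w. wstep KGCV (plugW W' (lift (Suc (Suc n) + depthW W') 0 w)) (plugW W0 (lift (Suc (Suc n) + depthW W0) 0 w))" by blast
    then show ?thesis using CESL \<open>u0 = u\<close> by (intro exI[of _ "CESL W' u"]) (auto intro: wstep.esL)
  next
    case (CESR u0 W0)
    with esL.prems have "u = plugW W0 (Var (n + depthW W0))" "u0 = t'" by auto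
    then show ?thesis using CESR esL by (intro exI[of _ "CESR t W0"]) (auto intro: wstep.esL)
  qed (use esL.prems in auto)
next
  case (esR k u u' t)
  show ?case
  proof (cases W)
    case (CESR u0 W0)
    with esR.prems have "u' = plugW W0 (Var (n + depthW W0))" "u0 = t" by auto
    from esR.IH[OF esR.prems(1) this(1)] obtain W' where
      "u = plugW W' (Var (n + depthW W'))"
      "\<forall>w. wstep KGCV (plugW W' (lift (Suc n + depthW W') 0 w)) (plugW W0 (lift (Suc n + depthW W0) 0 w))" by blast
    then show ?thesis using CESR \<open>u0 = t\<close> by (intro exI[of _ "CESR t W'"]) (auto intro: wstep.esR)
  next
    case (CESL W0 u0)
    with esR.prems have "t = plugW W0 (Var (Suc n + depthW W0))" "u0 = u'" by auto
    then show ?thesis using CESL esR by (intro exI[of _ "CESL W0 u"]) (auto intro: wstep.esR)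
  qed (use esR.prems in auto)
qed auto

lemma pow1: "wgcv x y \<Longrightarrow> (wgcv ^^ 1) x y" by (metis relpowp_1)

lemma swap1: "wstep g t s \<Longrightarrow> g = KGCV \<Longrightarrow> wstep k s u \<Longrightarrow> k \<noteq> KGCV \<Longrightarrow>
  \<exists>r m. wstep k t r \<and> (wgcv ^^ m) r u \<and> 1 \<le> m"
proof (induction arbitrary: u rule: wstep.induct)
  case (root_gcv t0 S v)
  define a where "a = lower 0 t0"
  have t0: "t0 = lift (Suc 0) 0 a" using root_gcv(1) lift_lower a_def by simp
  have occ: "\<forall>i<length S. \<not> occurs i (lift (length S) 0 a)" by (simp add: occurs_lift)
  have st: "wstep k (plugS S (lift (length S) 0 a)) u" using root_gcv a_def by simp
  from step_plugS_split[OF st occ root_gcv(4)] show ?case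
  proof
    assume "\<exists>A'. wstep k (lift (length S) 0 a) A' \<and> u = plugS S A'"
    then obtain A' where A': "wstep k (lift (length S) 0 a) A'" "u = plugS S A'" by blast
    from wstep_lift_refl[OF A'(1) refl] obtain a' where a': "wstep k a a'" "A' = lift (length S) 0 a'" by blast
    have "wstep k (ES t0 (plugS S (Lam v))) (ES (lift (Suc 0) 0 a') (plugS S (Lam v)))"
      using t0 wstep_lift[OF a'(1)] by (simp add: wstep.esL)
    moreover have "wgcv (ES (lift (Suc 0) 0 a') (plugS S (Lam v))) u"
      using gcv_root' A'(2) a'(2) by (simp add: wgcv_def)
    ultimately show ?thesis by (intro exI conjI) (auto intro: pow1)
  next
    assume "\<exists>S'. length S' = length S \<and> u = plugS S' (lift (length S) 0 a) \<and> (\<forall>B. wstep k (plugS S B) (plugS S' B))"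
    then obtain S' where S': "length S' = length S" "u = plugS S' (lift (length S) 0 a)" "\<forall>B. wstep k (plugS S B) (plugS S' B)" by blast
    have "wstep k (ES t0 (plugS S (Lam v))) (ES t0 (plugS S' (Lam v)))"
      using S'(3) by (simp add: wstep.esR)
    moreover have "wgcv (ES t0 (plugS S' (Lam v))) u"
      using gcv_root'[of a S' v] S' t0 by (simp add: wgcv_def)
    ultimately show ?thesis by (intro exI conjI) (auto intro: pow1)
  qed
next
  case (appL g t1 s1 w)
  from appL.prems(2) show ?case
  proof (cases rule: wstep.cases)
    case (root_m S b)
    from M_lemma[OF appL.hyps appL.prems(1) root_m(2)] obtain S' b' where
      m: "t1 = plugS S' (Lam b')" "\<forall>w. wstep KGCV (plugS S' (ES b' (lift (length S') 0 w))) (plugS S (ES b (lift (length S) 0 w)))"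
      by blast
    have "wstep k (App t1 w) (plugS S' (ES b' (lift (length S') 0 w)))"
      using m(1) root_m wstep.root_m by simp
    moreover have "wgcv (plugS S' (ES b' (lift (length S') 0 w))) u"
      using m(2) root_m by (simp add: wgcv_def)
    ultimately show ?thesis by (intro exI conjI) (auto intro: pow1)
  next
    case (appL u1)
    from appL.IH[OF appL.prems(1) appL(2) appL.prems(3)] obtain r m where
      "wstep k t1 r" "(wgcv ^^ m) r u1" "1 \<le> m" by blast
    then show ?thesis using appL wgcv_pow_plugW[of m r u1 "CAppL Hole w"]
      by (intro exI[of _ "App r w"] exI[of _ m]) (auto intro: wstep.appL)
  next
    case (appR w')
    have "wgcv (App t1 w') u" using appR appL.hyps appL.prems(1) by (simp add: wgcv_def wstep.appL)
    then show ?thesis using appR by (intro exI[of _ "App t1 w'"] exI[of _ 1]) (auto intro: wstep.appR)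
  qed
next
  case (appR g t1 s1 w)
  from appR.prems(2) show ?case
  proof (cases rule: wstep.cases)
    case (root_m S b)
    have "wstep k (App w t1) (plugS S (ES b (lift (length S) 0 t1)))"
      using root_m wstep.root_m by simp
    moreover have "wgcv (plugS S (ES b (lift (length S) 0 t1))) u"
      using root_m appR.hyps appR.prems(1) by (simp add: wgcv_def wstep_plugS wstep.esR wstep_lift)
    ultimately show ?thesis by (intro exI conjI) (auto intro: pow1)
  next
    case (appR u1)
    from appR.IH[OF appR.prems(1) appR(2) appR.prems(3)] obtain r m where
      "wstep k t1 r" "(wgcv ^^ m) r u1" "1 \<le> m" by blast
    then show ?thesis using appR wgcv_pow_plugW[of m r u1 "CAppR w Hole"]
      by (intro exI[of _ "App w r"] exI[of _ m]) (auto intro: wstep.appR)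
  next
    case (appL w')
    have "wgcv (App w' t1) u" using appL appR.hyps appR.prems(1) by (simp add: wgcv_def wstep.appR)
    then show ?thesis using appL by (intro exI[of _ "App w' t1"] exI[of _ 1]) (auto intro: wstep.appL)
  qed
next
  case (esL g t1 s1 w)
  from esL.prems(2) show ?case
  proof (cases rule: wstep.cases)
    case (root_e W)
    have s1: "s1 = plugW W (Var (0 + depthW W))" using root_e by simp
    from E_lemma[OF esL.hyps esL.prems(1) s1] obtain W' where
      e: "t1 = plugW W' (Var (0 + depthW W'))"
      "\<forall>w. wstep KGCV (plugW W' (lift (Suc 0 + depthW W') 0 w)) (plugW W (lift (Suc 0 + depthW W) 0 w))"
      by blast
    have "wstep k (ES t1 w) (ES (plugW W' (lift (Suc (depthW W')) 0 w)) w)"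
      using e(1) root_e wstep.root_e by simp
    moreover have "wgcv (ES (plugW W' (lift (Suc (depthW W')) 0 w)) w) u"
      using e(2) root_e by (simp add: wgcv_def wstep.esL)
    ultimately show ?thesis by (intro exI conjI) (auto intro: pow1)
  next
    case (esL u1)
    from esL.IH[OF esL.prems(1) esL(2) esL.prems(3)] obtain r m where
      "wstep k t1 r" "(wgcv ^^ m) r u1" "1 \<le> m" by blast
    then show ?thesis using esL wgcv_pow_plugW[of m r u1 "CESL Hole w"]
      by (intro exI[of _ "ES r w"] exI[of _ m]) (auto intro: wstep.esL)
  next
    case (esR w')
    have "wgcv (ES t1 w') u" using esR esL.hyps esL.prems(1) by (simp add: wgcv_def wstep.esL)
    then show ?thesis using esR by (intro exI[of _ "ES t1 w'"] exI[of _ 1]) (auto intro: wstep.esR)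
  qed (use esL.prems in auto)
next
  case (esR g t1 s1 w)
  from esR.prems(2) show ?case
  proof (cases rule: wstep.cases)
    case (root_e W)
    let ?r = "ES (plugW W (lift (Suc (depthW W)) 0 t1)) t1"
    let ?r2 = "ES (plugW W (lift (Suc (depthW W)) 0 s1)) t1"
    have "wstep k (ES w t1) ?r" using root_e wstep.root_e by simp
    moreover have "wgcv ?r ?r2" using esR.hyps esR.prems(1)
      by (simp add: wgcv_def wstep.esL wstep_plugW wstep_lift)
    moreover have "wgcv ?r2 u" using esR.hyps esR.prems(1) root_e
      by (simp add: wgcv_def wstep.esR)
    ultimately have "wstep k (ES w t1) ?r \<and> (wgcv ^^ 2) ?r u"
      by (metis pow1 relpowp_Suc_I2 Suc_1)
    then show ?thesis by (intro exI[of _ ?r] exI[of _ 2]) auto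
  next
    case (esR u1)
    from esR.IH[OF esR.prems(1) esR(2) esR.prems(3)] obtain r m where
      "wstep k t1 r" "(wgcv ^^ m) r u1" "1 \<le> m" by blast
    then show ?thesis using esR wgcv_pow_plugW[of m r u1 "CESR w Hole"]
      by (intro exI[of _ "ES w r"] exI[of _ m]) (auto intro: wstep.esR)
  next
    case (esL w')
    have "wgcv (ES w' t1) u" using esL esR.hyps esR.prems(1) by (simp add: wgcv_def wstep.esR)
    then show ?thesis using esL by (intro exI[of _ "ES w' t1"] exI[of _ 1]) (auto intro: wstep.esL)
  qed (use esR.prems in auto)
qed auto

lemma swap1': "wgcv t s \<Longrightarrow> wngcv s u \<Longrightarrow> \<exists>r m. wngcv t r \<and> (wgcv ^^ m) r u \<and> 1 \<le> m"
proof -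
  assume a: "wgcv t s" "wngcv s u"
  have g: "wstep KGCV t s" using a(1) by (simp add: wgcv_def)
  from a(2) obtain k where k: "wstep k s u" "k = KM \<or> k = KE" by (auto simp: wngcv_def)
  then have "k \<noteq> KGCV" by auto
  from swap1[OF g refl k(1) this] obtain r m where "wstep k t r" "(wgcv ^^ m) r u" "1 \<le> m" by blast
  then show ?thesis using k(2) by (intro exI[of _ r] exI[of _ m]) (auto simp: wngcv_def)
qed

lemma swapn: "(wgcv ^^ n) t s \<Longrightarrow> wngcv s u \<Longrightarrow> \<exists>r m. wngcv t r \<and> (wgcv ^^ m) r u \<and> n \<le> m"
proof (induction n arbitrary: t)
  case 0 then show ?case by (intro exI[of _ u] exI[of _ 0]) auto
next
  case (Suc n)
  from relpowp_Suc_D2[OF Suc.prems(1)] obtain t1 where "wgcv t t1" "(wgcv ^^ n) t1 s" by blast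
  from Suc.IH[OF this(2) Suc.prems(2)] obtain r1 m where r1: "wngcv t1 r1" "(wgcv ^^ m) r1 u" "n \<le> m" by blast
  from swap1'[OF \<open>wgcv t t1\<close> r1(1)] obtain r m1 where r: "wngcv t r" "(wgcv ^^ m1) r r1" "1 \<le> m1" by blast
  have "(wgcv ^^ (m1 + m)) r u" unfolding relpowp_add using r(2) r1(2) by blast
  then show ?case using r r1 by (intro exI[of _ r] exI[of _ "m1 + m"]) auto
qed

lemma swapK: "(wngcv ^^ K) s u \<Longrightarrow> (wgcv ^^ n) t s \<Longrightarrow> \<exists>r m. (wngcv ^^ K) t r \<and> (wgcv ^^ m) r u \<and> n \<le> m"
proof (induction K arbitrary: s t n)
  case 0 then show ?case by (intro exI[of _ t] exI[of _ n]) auto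
next
  case (Suc K)
  from relpowp_Suc_D2[OF Suc.prems(1)] obtain s1 where "wngcv s s1" "(wngcv ^^ K) s1 u" by blast
  from swapn[OF Suc.prems(2) this(1)] obtain r1 m1 where r1: "wngcv t r1" "(wgcv ^^ m1) r1 s1" "n \<le> m1" by blast
  from Suc.IH[OF \<open>(wngcv ^^ K) s1 u\<close> r1(2)] obtain r m where r: "(wngcv ^^ K) r1 r" "(wgcv ^^ m) r u" "m1 \<le> m" by blast
  have "(wngcv ^^ Suc K) t r" using r1(1) r(1) by (rule relpowp_Suc_I2)
  then show ?case using r r1 by (intro exI[of _ r] exI[of _ m]) auto
qed

theorem proposition4p4:
  assumes "wseq t d u"
  shows "\<exists>s h. (wngcv ^^ length (filter (\<lambda>k. k \<noteq> KGCV) d)) t s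
              \<and> (wgcv ^^ h) s u
              \<and> h \<ge> length (filter (\<lambda>k. k = KGCV) d)"
  using assms
proof (induction rule: wseq.induct)
  case (nil t) then show ?case by (intro exI[of _ t] exI[of _ 0]) auto
next
  case (cons k t s ks u)
  then obtain s' h where ih: "(wngcv ^^ length (filter (\<lambda>k. k \<noteq> KGCV) ks)) s s'"
    "(wgcv ^^ h) s' u" "h \<ge> length (filter (\<lambda>k. k = KGCV) ks)" by blast
  show ?case
  proof (cases "k = KGCV")
    case True
    then have "(wgcv ^^ 1) t s" using cons(1) by (intro pow1) (simp add: wgcv_def)
    from swapK[OF ih(1) this] obtain r m where r: "(wngcv ^^ length (filter (\<lambda>k. k \<noteq> KGCV) ks)) t r"
      "(wgcv ^^ m) r s'" "1 \<le> m" by blast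
    have "(wgcv ^^ (m + h)) r u" unfolding relpowp_add using r(2) ih(2) by blast
    then show ?thesis using True r ih by (intro exI[of _ r] exI[of _ "m + h"]) auto
  next
    case False
    then have "wngcv t s" using cons(1) by (cases k) (auto simp: wngcv_def)
    then have "(wngcv ^^ Suc (length (filter (\<lambda>k. k \<noteq> KGCV) ks))) t s'" using ih(1) by (rule relpowp_Suc_I2)
    then show ?thesis using False ih by (intro exI[of _ s'] exI[of _ h]) auto
  qed
qed

end
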